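(* Let $\mathcal{G}_1$ be an $r_1$-regular graph on $n_1$ vertices and $\mathcal{G}_2$ an $r_2$-regular graph on $n_2$ vertices. Let $\nu_{11},\nu_{12},\ldots,\nu_{1n_1}$ be the signless Laplacian eigenvalues of $\mathcal{G}_1$. Then the signless Laplacian characteristic polynomial of $\mathcal{G}_1\circledast\mathcal{G}_2$ satisfies $$f(Q_{\mathcal{G}_1\circledast \mathcal{G}_2},x)=(x-r_1n_2-n_2)^{n_1(n_2-1)}\, f(Q_{\mathcal{G}_2},x-n_2)^{n_1}\cdot \prod_{i=1}^{n_1}\big[x-n_2-n_2\nu_{1i}-n_2\chi_{Q_{\mathcal{G}_2}}(x-n_2)\big].$$
   Context: All graphs are simple, finite and undirected. For a graph $\mathcal{G}$ with adjacency matrix $A_{\mathcal{G}}$ and diagonal degree matrix $D_{\mathcal{G}}$, the signless Laplacian matrix is $Q_{\mathcal{G}}=D_{\mathcal{G}}+A_{\mathcal{G}}$. For a square matrix $M$, $f(M,x)=\det(xI-M)$. The signless Laplacian coronal of a graph $\mathcal{G}$ on $n$ vertices is the rational function $\chi_{Q_{\mathcal{G}}}(x)=\mathbf{1}_n^T(xI_n-Q_{\mathcal{G}})^{-1}\mathbf{1}_n$, with $\mathbf{1}_n$ the all-ones column vector. The graph product $\mathcal{G}_1\circledast\mathcal{G}_2$ of $\mathcal{G}_1$ (vertices $u_1,\ldots,u_{n_1}$) and $\mathcal{G}_2$ (vertices $v_1,\ldots,v_{n_2}$) has vertex set $\{a_{ik},b_{ik}:1\le i\le n_1,1\le k\le n_2\}$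 and edges: (1) $a_{ik}a_{jl}$ for all $1\le k,l\le n_2$ whenever $u_iu_j\in E(\mathcal{G}_1)$; (2) $b_{ri}b_{rj}$ for all $1\le r\le n_1$ whenever $v_iv_j\in E(\mathcal{G}_2)$; (3) $a_{ip}b_{iq}$ for all $1\le i\le n_1$, $1\le p,q\le n_2$. The identity is one of rational functions in $x$. *)

theory Defs
  imports "Jordan_Normal_Form.Matrix" "Jordan_Normal_Form.Determinant"
    "Jordan_Normal_Form.Char_Poly" "Jordan_Normal_Form.Gauss_Jordan_Elimination"
begin

definition simple_graph :: "nat \<Rightarrow> (nat \<Rightarrow> nat \<Rightarrow> bool) \<Rightarrow> bool" where
  "simple_graph n E \<longleftrightarrow> (\<forall>i<n. \<forall>j<n. E i j \<longleftrightarrow> E j i) \<and> (\<forall>i<n. \<not> E i i)"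

definition degree :: "nat \<Rightarrow> (nat \<Rightarrow> nat \<Rightarrow> bool) \<Rightarrow> nat \<Rightarrow> nat" where
  "degree n E i = card {j. j < n \<and> E i j}"

definition regular_graph :: "nat \<Rightarrow> (nat \<Rightarrow> nat \<Rightarrow> bool) \<Rightarrow> nat \<Rightarrow> bool" where
  "regular_graph n E r \<longleftrightarrow> simple_graph n E \<and> (\<forall>i<n. degree n E i = r)"

definition adj_matrix :: "nat \<Rightarrow> (nat \<Rightarrow> nat \<Rightarrow> bool) \<Rightarrow> real mat" where
  "adj_matrix n E = mat n n (\<lambda>(i,j). if E i j then 1 else 0)"

definition deg_matrix :: "nat \<Rightarrow> (nat \<Rightarrow> nat \<Rightarrow> bool) \<Rightarrow> real mat" where
  "deg_matrix n E = mat_diag n (\<lambda>i. real (degree n E i))"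

definition signless_laplacian :: "nat \<Rightarrow> (nat \<Rightarrow> nat \<Rightarrow> bool) \<Rightarrow> real mat" where
  "signless_laplacian n E = deg_matrix n E + adj_matrix n E"

definition charf :: "real mat \<Rightarrow> real \<Rightarrow> real" where
  "charf M x = det (x \<cdot>\<^sub>m 1\<^sub>m (dim_row M) - M)"

text \<open>Coronal 1^T (xI - M)^{-1} 1 (meaningful where xI - M is invertible).\<close>
definition coronal :: "real mat \<Rightarrow> real \<Rightarrow> real" where
  "coronal M x = (case mat_inverse (x \<cdot>\<^sub>m 1\<^sub>m (dim_row M) - M) of
      Some B \<Rightarrow> (\<Sum>i<dim_row M. \<Sum>j<dim_row M. B $$ (i,j))
    | None \<Rightarrow> 0)"

text \<open>The product G1 (*) G2 on vertex set {0..<2*n1*n2}: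
  a_{ik} \<mapsto> i*n2 + k, b_{ik} \<mapsto> n1*n2 + i*n2 + k (0-indexed, i<n1, k<n2).\<close>
definition prod_edge :: "nat \<Rightarrow> (nat \<Rightarrow> nat \<Rightarrow> bool) \<Rightarrow> nat \<Rightarrow> (nat \<Rightarrow> nat \<Rightarrow> bool)
    \<Rightarrow> nat \<Rightarrow> nat \<Rightarrow> bool" where
  "prod_edge n1 E1 n2 E2 u v \<longleftrightarrow>
     (\<exists>i<n1. \<exists>j<n1. \<exists>k<n2. \<exists>l<n2. E1 i j \<and> u = i*n2 + k \<and> v = j*n2 + l)
   \<or> (\<exists>r<n1. \<exists>i<n2. \<exists>j<n2. E2 i j \<and> u = n1*n2 + r*n2 + i \<and> v = n1*n2 + r*n2 + j)
   \<or> (\<exists>i<n1. \<exists>p<n2. \<exists>q<n2. (u = i*n2 + p \<and> v = n1*n2 + i*n2 + q)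
                            \<or> (v = i*n2 + p \<and> u = n1*n2 + i*n2 + q))"

end

theory Submission
  imports Defs
begin


lemma schur_br:
  fixes A :: "'a::field mat"
  assumes A: "A \<in> carrier_mat n n" and B: "B \<in> carrier_mat n m"
    and C: "C \<in> carrier_mat m n" and D: "D \<in> carrier_mat m m"
    and Di: "Di \<in> carrier_mat m m" and DDi: "D * Di = 1\<^sub>m m"
  shows "det (four_block_mat A B C D) = det D * det (A - B * Di * C)"
proof -
  let ?P = "four_block_mat (1\<^sub>m n) (0\<^sub>m n m) (- (Di * C)) (1\<^sub>m m)"
  have DiC: "Di * C \<in> carrier_mat m n" using Di C by auto
  have "four_block_mat A B C D * ?P = four_block_mat (A * 1\<^sub>m n + B * (- (Di * C))) (A * 0\<^sub>m n m + B * 1\<^sub>m m)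
     (C * 1\<^sub>m n + D * (- (Di * C))) (C * 0\<^sub>m n m + D * 1\<^sub>m m)"
    using A B C D DiC by (intro mult_four_block_mat[of A n n B m C m D "1\<^sub>m n" n "0\<^sub>m n m" m "- (Di * C)" "1\<^sub>m m"]) auto
  also have "A * 1\<^sub>m n + B * (- (Di * C)) = A - B * Di * C"
  proof -
    have "B * (- (Di * C)) = - (B * (Di * C))" using B Di by (intro uminus_mult_right_mat) (simp add: carrier_matD)
    also have "B * (Di * C) = B * Di * C" using B Di C by (simp add: assoc_mult_mat)
    finally show ?thesis using A B Di C by (simp add: minus_add_uminus_mat)
  qed
  also have "A * 0\<^sub>m n m + B * 1\<^sub>m m = B" using A B by simp
  also have "C * 1\<^sub>m n + D * (- (Di * C)) = 0\<^sub>m m n"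
  proof -
    have "D * (- (Di * C)) = - (D * (Di * C))" using D Di by (intro uminus_mult_right_mat) (simp add: carrier_matD)
    also have "D * (Di * C) = D * Di * C" using D Di C by (simp add: assoc_mult_mat)
    also have "\<dots> = C" using DDi C by simp
    finally have "D * (- (Di * C)) = - C" .
    thus ?thesis using C by (simp add: comm_add_mat[of C m n "- C"])
  qed
  also have "C * 0\<^sub>m n m + D * 1\<^sub>m m = D" using C D by simp
  finally have eq: "four_block_mat A B C D * ?P = four_block_mat (A - B * Di * C) B (0\<^sub>m m n) D" .
  have dP: "det ?P = 1"
    using det_four_block_mat_upper_right_zero[of "1\<^sub>m n" n "0\<^sub>m n m" m "- (Di * C)" "1\<^sub>m m"] DiC by simp
  have "det (four_block_mat A B C D * ?P) = det (four_block_mat A B C D) * det ?P"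
    by (rule det_mult[of _ "n+m"], insert A B C D DiC, auto)
  hence "det (four_block_mat A B C D) = det (four_block_mat (A - B * Di * C) B (0\<^sub>m m n) D)"
    using eq dP by simp
  also have "\<dots> = det (A - B * Di * C) * det D"
    by (rule det_four_block_mat_lower_left_zero[of _ n B m], insert A B C D Di, auto)
  finally show ?thesis by simp
qed

lemma schur_tl:
  fixes A :: "'a::field mat"
  assumes A: "A \<in> carrier_mat n n" and B: "B \<in> carrier_mat n m"
    and C: "C \<in> carrier_mat m n" and D: "D \<in> carrier_mat m m"
    and Ai: "Ai \<in> carrier_mat n n" and AAi: "A * Ai = 1\<^sub>m n"
  shows "det (four_block_mat A B C D) = det A * det (D - C * Ai * B)"
proof -
  let ?P = "four_block_mat (1\<^sub>m n) (- (Ai * B)) (0\<^sub>m m n) (1\<^sub>m m)"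
  have AiB: "Ai * B \<in> carrier_mat n m" using Ai B by auto
  have "four_block_mat A B C D * ?P = four_block_mat (A * 1\<^sub>m n + B * 0\<^sub>m m n) (A * (- (Ai * B)) + B * 1\<^sub>m m)
     (C * 1\<^sub>m n + D * 0\<^sub>m m n) (C * (- (Ai * B)) + D * 1\<^sub>m m)"
    using A B C D AiB by (intro mult_four_block_mat[of A n n B m C m D "1\<^sub>m n" n "- (Ai * B)" m "0\<^sub>m m n" "1\<^sub>m m"]) auto
  also have "C * (- (Ai * B)) + D * 1\<^sub>m m = D - C * Ai * B"
  proof -
    have "C * (- (Ai * B)) = - (C * (Ai * B))" using C Ai by (intro uminus_mult_right_mat) (simp add: carrier_matD)
    also have "C * (Ai * B) = C * Ai * B" using C Ai B by (simp add: assoc_mult_mat)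
    finally show ?thesis using D C Ai B 
      by (simp add: minus_add_uminus_mat comm_add_mat[of "- (C * (Ai * B))" m m D])
  qed
  also have "A * 1\<^sub>m n + B * 0\<^sub>m m n = A" using A B by simp
  also have "A * (- (Ai * B)) + B * 1\<^sub>m m = 0\<^sub>m n m"
  proof -
    have "A * (- (Ai * B)) = - (A * (Ai * B))" using A Ai by (intro uminus_mult_right_mat) (simp add: carrier_matD)
    also have "A * (Ai * B) = A * Ai * B" using A Ai B by (simp add: assoc_mult_mat)
    also have "\<dots> = B" using AAi B by simp
    finally have "A * (- (Ai * B)) = - B" .
    thus ?thesis using B by simp
  qed
  also have "C * 1\<^sub>m n + D * 0\<^sub>m m n = C" using C D by simp
  finally have eq: "four_block_mat A B C D * ?P = four_block_mat A (0\<^sub>m n m) C (D - C * Ai * B)" .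
  have dP: "det ?P = 1"
    using det_four_block_mat_lower_left_zero[of "1\<^sub>m n" n "- (Ai * B)" m "0\<^sub>m m n" "1\<^sub>m m"] AiB by simp
  have "det (four_block_mat A B C D * ?P) = det (four_block_mat A B C D) * det ?P"
    by (rule det_mult[of _ "n+m"], insert A B C D AiB, auto)
  hence "det (four_block_mat A B C D) = det (four_block_mat A (0\<^sub>m n m) C (D - C * Ai * B))"
    using eq dP by simp
  also have "\<dots> = det A * det (D - C * Ai * B)"
    by (rule det_four_block_mat_upper_right_zero[of _ n _ m], insert A B C D Ai, auto)
  finally show ?thesis by simp
qed

lemma sylvester_nz:
  fixes U :: "'a::field mat"
  assumes U: "U \<in> carrier_mat N m" and V: "V \<in> carrier_mat m N" and a: "a \<noteq> 0" and mN: "m \<le> N"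
  shows "det (a \<cdot>\<^sub>m 1\<^sub>m N - U * V) = a ^ (N - m) * det (a \<cdot>\<^sub>m 1\<^sub>m m - V * U)"
proof -
  let ?K = "four_block_mat (a \<cdot>\<^sub>m 1\<^sub>m N) U V (1\<^sub>m m)"
  have "det ?K = det (1\<^sub>m m) * det (a \<cdot>\<^sub>m 1\<^sub>m N - U * 1\<^sub>m m * V)"
    by (rule schur_br[of _ N _ m], insert U V, auto)
  also have "U * 1\<^sub>m m * V = U * V" using U by simp
  finally have 1: "det ?K = det (a \<cdot>\<^sub>m 1\<^sub>m N - U * V)" by simp
  have "det ?K = det (a \<cdot>\<^sub>m 1\<^sub>m N) * det (1\<^sub>m m - V * ((1/a) \<cdot>\<^sub>m 1\<^sub>m N) * U)"
    by (rule schur_tl[of _ N _ m], insert U V a, auto)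
  also have "V * ((1/a) \<cdot>\<^sub>m 1\<^sub>m N) * U = (1/a) \<cdot>\<^sub>m (V * U)"
    using U V mult_smult_distrib[OF V one_carrier_mat, of "1/a"] mult_smult_assoc_mat[OF V U, of "1/a"] by simp
  finally have 2: "det ?K = a ^ N * det (1\<^sub>m m - (1/a) \<cdot>\<^sub>m (V * U))" by simp
  have "a \<cdot>\<^sub>m 1\<^sub>m m - V * U = a \<cdot>\<^sub>m (1\<^sub>m m - (1/a) \<cdot>\<^sub>m (V * U))"
    using U V a by (intro eq_matI) (auto simp: field_simps)
  hence "det (a \<cdot>\<^sub>m 1\<^sub>m m - V * U) = a ^ m * det (1\<^sub>m m - (1/a) \<cdot>\<^sub>m (V * U))"
    using U V by simp
  hence "a ^ (N - m) * det (a \<cdot>\<^sub>m 1\<^sub>m m - V * U) = a ^ (N - m) * a ^ m * det (1\<^sub>m m - (1/a) \<cdot>\<^sub>m (V * U))"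
    by simp
  also have "a ^ (N - m) * a ^ m = a ^ N" using mN by (simp add: power_add[symmetric])
  finally show ?thesis using 1 2 by simp
qed

lemma char_poly_eval:
  fixes A :: "'a::field mat"
  assumes A: "A \<in> carrier_mat n n"
  shows "poly (char_poly A) a = det (a \<cdot>\<^sub>m 1\<^sub>m n - A)"
  unfolding char_poly_def
  by (rule poly_det_cong[of _ n], insert A, auto simp: char_poly_matrix_def)

lemma sylvester:
  fixes U :: "real mat"
  assumes U: "U \<in> carrier_mat N m" and V: "V \<in> carrier_mat m N" and mN: "m \<le> N"
  shows "det (a \<cdot>\<^sub>m 1\<^sub>m N - U * V) = a ^ (N - m) * det (a \<cdot>\<^sub>m 1\<^sub>m m - V * U)"
proof -
  have UV: "U * V \<in> carrier_mat N N" and VU: "V * U \<in> carrier_mat m m" using U V by auto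
  define p where "p = char_poly (U * V) - monom 1 (N - m) * char_poly (V * U)"
  have ev: "poly p b = det (b \<cdot>\<^sub>m 1\<^sub>m N - U * V) - b ^ (N - m) * det (b \<cdot>\<^sub>m 1\<^sub>m m - V * U)" for b
    unfolding p_def using char_poly_eval[OF UV] char_poly_eval[OF VU] by (simp add: poly_monom)
  have "{b. b \<noteq> 0} \<subseteq> {b. poly p b = 0}"
    using sylvester_nz[OF U V _ mN] ev by auto
  moreover have "infinite {b::real. b \<noteq> 0}"
  proof
    assume "finite {b::real. b \<noteq> 0}"
    hence "finite (insert 0 {b::real. b \<noteq> 0})" by simp
    also have "insert 0 {b::real. b \<noteq> 0} = UNIV" by auto
    finally show False using infinite_UNIV_char_0 by blast
  qed
  ultimately have "infinite {b. poly p b = 0}" using finite_subset by blast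
  hence "p = 0" using poly_roots_finite by blast
  thus ?thesis using ev[of a] by simp
qed



lemma sum_div_mod: "(\<Sum>w\<in>{0..<n1*(n2::nat)}. f w) = (\<Sum>i\<in>{0..<n1}. \<Sum>k\<in>{0..<n2}. f (i*n2+k))"
proof (induction n1)
  case 0 then show ?case by simp
next
  case (Suc n)
  have "(\<Sum>w\<in>{0..<Suc n*n2}. f w) = (\<Sum>w\<in>{0..<n*n2}. f w) + (\<Sum>w\<in>{n*n2..<n*n2+n2}. f w)"
    by (simp add: sum.atLeastLessThan_concat add.commute)
  also have "(\<Sum>w\<in>{n*n2..<n*n2+n2}. f w) = (\<Sum>k\<in>{0..<n2}. f (n*n2+k))"
    using sum.shift_bounds_nat_ivl[of f 0 "n*n2" n2] by (simp add: ac_simps)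
  finally show ?case using Suc by simp
qed

lemma div_mod_unique:
  assumes "k < (n2::nat)" shows "(i*n2+k) div n2 = i" "(i*n2+k) mod n2 = k"
  using assms by auto

definition bd :: "nat \<Rightarrow> nat \<Rightarrow> real mat \<Rightarrow> real mat" where
  "bd n1 n2 M = mat (n1*n2) (n1*n2) (\<lambda>(u,v). if u div n2 = v div n2 then M $$ (u mod n2, v mod n2) else 0)"

lemma bd_carrier[simp]: "bd n1 n2 M \<in> carrier_mat (n1*n2) (n1*n2)"
  unfolding bd_def by simp

lemma bd_dim[simp]: "dim_row (bd n1 n2 M) = n1*n2" "dim_col (bd n1 n2 M) = n1*n2"
  unfolding bd_def by simp_all

lemma idx_bounds: assumes "u < n1 * (n2::nat)" shows "u div n2 < n1" "u mod n2 < n2" "0 < n2"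
proof -
  show "0 < n2" using assms by (cases n2) auto
  thus "u mod n2 < n2" by simp
  show "u div n2 < n1" using assms by (simp add: less_mult_imp_div_less)
qed

lemma idx_lt: assumes "i < n1" "k < (n2::nat)" shows "i*n2+k < n1*n2"
proof -
  have "i*n2+k < (i+1)*n2" using assms by simp
  also have "(i+1)*n2 \<le> n1*n2" using assms by (intro mult_le_mono1) auto
  finally show ?thesis .
qed

lemma bd_mult:
  assumes M: "M \<in> carrier_mat n2 n2" and M': "M' \<in> carrier_mat n2 n2"
  shows "bd n1 n2 M * bd n1 n2 M' = bd n1 n2 (M * M')"
proof (rule eq_matI)
  fix u v assume u: "u < dim_row (bd n1 n2 (M * M'))" and v: "v < dim_col (bd n1 n2 (M * M'))"
  hence u': "u < n1*n2" and v': "v < n1*n2" by (auto simp: bd_def)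
  note iu = idx_bounds[OF u'] and iv = idx_bounds[OF v']
  have "(bd n1 n2 M * bd n1 n2 M') $$ (u,v) = (\<Sum>w\<in>{0..<n1*n2}. bd n1 n2 M $$ (u,w) * bd n1 n2 M' $$ (w,v))"
    using u' v' by (simp add: scalar_prod_def bd_def)
  also have "\<dots> = (\<Sum>i\<in>{0..<n1}. \<Sum>k\<in>{0..<n2}. bd n1 n2 M $$ (u,i*n2+k) * bd n1 n2 M' $$ (i*n2+k,v))"
    by (rule sum_div_mod)
  also have "\<dots> = (\<Sum>i\<in>{0..<n1}. if i = u div n2 then (if u div n2 = v div n2 then 
        (\<Sum>k\<in>{0..<n2}. M $$ (u mod n2, k) * M' $$ (k, v mod n2)) else 0) else 0)"
  proof (rule sum.cong[OF refl])
    fix i assume i: "i \<in> {0..<n1}"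
    have lt: "k < n2 \<Longrightarrow> i*n2+k < n1*n2" for k
      using i idx_lt by auto
    show "(\<Sum>k\<in>{0..<n2}. bd n1 n2 M $$ (u,i*n2+k) * bd n1 n2 M' $$ (i*n2+k,v)) = (if i = u div n2 then (if u div n2 = v div n2 then 
        (\<Sum>k\<in>{0..<n2}. M $$ (u mod n2, k) * M' $$ (k, v mod n2)) else 0) else 0)"
      using u' v' lt by (auto simp: bd_def intro!: sum.cong)
  qed
  also have "\<dots> = (bd n1 n2 (M * M')) $$ (u,v)"
    using u' v' iu iv M M' by (simp add: bd_def scalar_prod_def)
  finally show "(bd n1 n2 M * bd n1 n2 M') $$ (u,v) = (bd n1 n2 (M * M')) $$ (u,v)" .
qed (auto simp: bd_def)

lemma bd_one: "bd n1 n2 (1\<^sub>m n2) = 1\<^sub>m (n1*n2)"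
proof (rule eq_matI)
  fix u v assume "u < dim_row (1\<^sub>m (n1*n2))" "v < dim_col (1\<^sub>m (n1*n2))"
  hence u: "u < n1*n2" and v: "v < n1*n2" by auto
  note iu = idx_bounds[OF u] and iv = idx_bounds[OF v]
  have "u = v \<longleftrightarrow> u div n2 = v div n2 \<and> u mod n2 = v mod n2"
    by (metis div_mult_mod_eq)
  thus "bd n1 n2 (1\<^sub>m n2) $$ (u,v) = 1\<^sub>m (n1*n2) $$ (u,v)"
    using u v iu iv by (auto simp: bd_def)
qed (auto simp: bd_def)

lemma det_bd:
  assumes M: "M \<in> carrier_mat n2 n2" and n2: "0 < n2"
  shows "det (bd n1 n2 M) = det M ^ n1"
proof (induction n1)
  case 0
  have "bd 0 n2 M = 1\<^sub>m 0" by (intro eq_matI) (auto simp: bd_def)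
  then show ?case by simp
next
  case (Suc n)
  have "bd (Suc n) n2 M = four_block_mat M (0\<^sub>m n2 (n*n2)) (0\<^sub>m (n*n2) n2) (bd n n2 M)"
  proof (rule eq_matI)
    fix u v assume "u < dim_row (four_block_mat M (0\<^sub>m n2 (n*n2)) (0\<^sub>m (n*n2) n2) (bd n n2 M))"
      "v < dim_col (four_block_mat M (0\<^sub>m n2 (n*n2)) (0\<^sub>m (n*n2) n2) (bd n n2 M))"
    hence u: "u < n2 + n*n2" and v: "v < n2 + n*n2" using M by auto
    show "bd (Suc n) n2 M $$ (u,v) = four_block_mat M (0\<^sub>m n2 (n*n2)) (0\<^sub>m (n*n2) n2) (bd n n2 M) $$ (u,v)"
    proof (cases "u < n2")
      case True
      then show ?thesis using u v M n2 by (auto simp: bd_def le_div_geq)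
    next
      case False
      then show ?thesis using u v M n2 by (auto simp: bd_def le_div_geq le_mod_geq)
    qed
  qed (use M in \<open>auto simp: bd_def\<close>)
  also have "det \<dots> = det M * det (bd n n2 M)"
    by (rule det_four_block_mat_lower_left_zero[of _ n2 _ "n*n2"], insert M, auto)
  finally show ?case using Suc by simp
qed



lemma degree_sum: "real (degree n E i) = (\<Sum>j\<in>{0..<n}. if E i j then 1 else 0)"
proof -
  have "{j. j < n \<and> E i j} = {j\<in>{0..<n}. E i j}" by auto
  hence "degree n E i = card {j\<in>{0..<n}. E i j}" by (simp add: degree_def)
  also have "\<dots> = (\<Sum>j\<in>{j\<in>{0..<n}. E i j}. 1)" by simp
  finally have "real (degree n E i) = (\<Sum>j\<in>{j\<in>{0..<n}. E i j}. (1::real))" by simp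
  also have "\<dots> = (\<Sum>j\<in>{0..<n}. if E i j then 1 else 0)" by (rule sum.inter_filter) simp
  finally show ?thesis .
qed

lemma decomp_unique: assumes "k < (n2::nat)" "u = i*n2+k" shows "i = u div n2" "k = u mod n2"
  using assms by auto

lemma no_wrap: "i < n1 \<Longrightarrow> k < n2 \<Longrightarrow> n1*n2 + v \<noteq> i*n2 + (k::nat)"
  using idx_lt[of i n1 k n2] by linarith

context
  fixes n1 n2 :: nat and E1 E2 :: "nat \<Rightarrow> nat \<Rightarrow> bool"
begin

abbreviation "pe \<equiv> prod_edge n1 E1 n2 E2"

lemma pe_aa: assumes u: "u < n1*n2" and v: "v < n1*n2"
  shows "pe u v \<longleftrightarrow> E1 (u div n2) (v div n2)"
proof
  assume h: "E1 (u div n2) (v div n2)"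
  have "u = (u div n2)*n2 + u mod n2" "v = (v div n2)*n2 + v mod n2" by simp_all
  thus "pe u v" unfolding prod_edge_def using idx_bounds[OF u] idx_bounds[OF v] h
    by blast
next
  assume "pe u v"
  hence "\<exists>i<n1. \<exists>j<n1. \<exists>k<n2. \<exists>l<n2. E1 i j \<and> u = i*n2+k \<and> v = j*n2+l"
    unfolding prod_edge_def using u v by (auto simp: no_wrap)
  then obtain i j k l where "k < n2" "l < n2" "E1 i j" "u = i*n2+k" "v = j*n2+l" by blast
  thus "E1 (u div n2) (v div n2)" using decomp_unique by metis
qed

lemma pe_ab: assumes u: "u < n1*n2" and v: "v < n1*n2"
  shows "pe u (n1*n2+v) \<longleftrightarrow> u div n2 = v div n2"
proof
  assume h: "u div n2 = v div n2"
  have "u = (u div n2)*n2 + u mod n2" "n1*n2+v = n1*n2 + (u div n2)*n2 + v mod n2"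
    using h by (metis div_mult_mod_eq add.assoc)+
  thus "pe u (n1*n2+v)" unfolding prod_edge_def using idx_bounds[OF u] idx_bounds[OF v]
    by blast
next
  assume "pe u (n1*n2+v)"
  hence "\<exists>i<n1. \<exists>p<n2. \<exists>q<n2. u = i*n2 + p \<and> n1*n2+v = n1*n2 + i*n2 + q"
    unfolding prod_edge_def using u v by (auto simp: no_wrap)
  then obtain i p q where "p < n2" "q < n2" "u = i*n2+p" "v = i*n2+q" by auto
  thus "u div n2 = v div n2" using decomp_unique by metis
qed

lemma pe_ba: assumes u: "u < n1*n2" and v: "v < n1*n2"
  shows "pe (n1*n2+u) v \<longleftrightarrow> u div n2 = v div n2"
proof
  assume h: "u div n2 = v div n2"
  have "v = (v div n2)*n2 + v mod n2" "n1*n2+u = n1*n2 + (v div n2)*n2 + u mod n2"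
    using h by (metis div_mult_mod_eq add.assoc)+
  thus "pe (n1*n2+u) v" unfolding prod_edge_def using idx_bounds[OF u] idx_bounds[OF v]
    by blast
next
  assume "pe (n1*n2+u) v"
  hence "\<exists>i<n1. \<exists>p<n2. \<exists>q<n2. v = i*n2 + p \<and> n1*n2+u = n1*n2 + i*n2 + q"
    unfolding prod_edge_def using u v by (auto simp: no_wrap)
  then obtain i p q where "p < n2" "q < n2" "v = i*n2+p" "u = i*n2+q" by auto
  thus "u div n2 = v div n2" using decomp_unique by metis
qed

lemma pe_bb: assumes u: "u < n1*n2" and v: "v < n1*n2"
  shows "pe (n1*n2+u) (n1*n2+v) \<longleftrightarrow> u div n2 = v div n2 \<and> E2 (u mod n2) (v mod n2)"
proof
  assume h: "u div n2 = v div n2 \<and> E2 (u mod n2) (v mod n2)"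
  have "n1*n2+u = n1*n2 + (u div n2)*n2 + u mod n2" "n1*n2+v = n1*n2 + (u div n2)*n2 + v mod n2"
    using conjunct1[OF h] by (metis div_mult_mod_eq add.assoc)+
  thus "pe (n1*n2+u) (n1*n2+v)" unfolding prod_edge_def using idx_bounds[OF u] idx_bounds[OF v] h
    by blast
next
  assume "pe (n1*n2+u) (n1*n2+v)"
  hence "\<exists>r<n1. \<exists>i<n2. \<exists>j<n2. E2 i j \<and> n1*n2+u = n1*n2 + r*n2 + i \<and> n1*n2+v = n1*n2 + r*n2 + j"
    unfolding prod_edge_def using u v by (auto simp: no_wrap)
  then obtain r i j where "i < n2" "j < n2" "E2 i j" "u = r*n2+i" "v = r*n2+j" by auto
  thus "u div n2 = v div n2 \<and> E2 (u mod n2) (v mod n2)" using decomp_unique by metis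
qed

lemma sum_two: "(\<Sum>w\<in>{0..<2*n1*n2}. f w) = (\<Sum>w\<in>{0..<n1*n2}. f w) + (\<Sum>w\<in>{0..<n1*n2}. f (n1*n2+w))"
proof -
  have e: "2*n1*n2 = n1*n2 + n1*n2" by simp
  have "(\<Sum>w\<in>{0..<2*n1*n2}. f w) = (\<Sum>w\<in>{0..<n1*n2}. f w) + (\<Sum>w\<in>{n1*n2..<n1*n2+n1*n2}. f w)"
    unfolding e by (rule sum.atLeastLessThan_concat[symmetric]) simp_all
  also have "(\<Sum>w\<in>{n1*n2..<n1*n2+n1*n2}. f w) = (\<Sum>w\<in>{0..<n1*n2}. f (n1*n2+w))"
    using sum.shift_bounds_nat_ivl[of f 0 "n1*n2" "n1*n2"] by (simp add: ac_simps)
  finally show ?thesis .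
qed

lemma sum_blocks_const: assumes "i0 < n1"
  shows "(\<Sum>w\<in>{0..<n1*n2}. (if P (w div n2) then 1 else 0::real)) = real n2 * (\<Sum>i\<in>{0..<n1}. if P i then 1 else 0)"
  by (simp add: sum_div_mod sum_distrib_left)

lemma deg_a: assumes u: "u < n1*n2" and G1: "regular_graph n1 E1 r1"
  shows "real (degree (2*n1*n2) pe u) = real r1 * real n2 + real n2"
proof -
  note iu = idx_bounds[OF u]
  have "real (degree (2*n1*n2) pe u) = (\<Sum>w\<in>{0..<n1*n2}. if pe u w then 1 else 0) + (\<Sum>w\<in>{0..<n1*n2}. if pe u (n1*n2+w) then 1 else 0)"
    by (simp add: degree_sum sum_two)
  also have "(\<Sum>w\<in>{0..<n1*n2}. if pe u w then 1 else 0) = (\<Sum>w\<in>{0..<n1*n2}. if E1 (u div n2) (w div n2) then 1 else (0::real))"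
    using pe_aa[OF u] by (intro sum.cong) auto
  also have "\<dots> = real n2 * (\<Sum>i\<in>{0..<n1}. if E1 (u div n2) i then 1 else 0)"
    by (rule sum_blocks_const[OF iu(1)])
  also have "(\<Sum>i\<in>{0..<n1}. if E1 (u div n2) i then 1 else (0::real)) = real (degree n1 E1 (u div n2))"
    by (simp add: degree_sum)
  also have "\<dots> = real r1" using G1 iu unfolding regular_graph_def by auto
  also have "(\<Sum>w\<in>{0..<n1*n2}. if pe u (n1*n2+w) then 1 else 0) = (\<Sum>w\<in>{0..<n1*n2}. if u div n2 = w div n2 then 1 else (0::real))"
    using pe_ab[OF u] by (intro sum.cong) auto
  also have "\<dots> = real n2 * (\<Sum>i\<in>{0..<n1}. if u div n2 = i then 1 else 0)"
    by (rule sum_blocks_const[OF iu(1)])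
  also have "(\<Sum>i\<in>{0..<n1}. if u div n2 = i then 1 else (0::real)) = 1"
    using iu by simp
  finally show ?thesis by (simp add: mult.commute)
qed

lemma deg_b: assumes u: "u < n1*n2" and G2: "regular_graph n2 E2 r2"
  shows "real (degree (2*n1*n2) pe (n1*n2+u)) = real r2 + real n2"
proof -
  note iu = idx_bounds[OF u]
  have "real (degree (2*n1*n2) pe (n1*n2+u)) = (\<Sum>w\<in>{0..<n1*n2}. if pe (n1*n2+u) w then 1 else 0) + (\<Sum>w\<in>{0..<n1*n2}. if pe (n1*n2+u) (n1*n2+w) then 1 else 0)"
    by (simp add: degree_sum sum_two)
  also have "(\<Sum>w\<in>{0..<n1*n2}. if pe (n1*n2+u) w then 1 else 0) = (\<Sum>w\<in>{0..<n1*n2}. if u div n2 = w div n2 then 1 else (0::real))"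
    using pe_ba[OF u] by (intro sum.cong) auto
  also have "\<dots> = real n2 * (\<Sum>i\<in>{0..<n1}. if u div n2 = i then 1 else 0)"
    by (rule sum_blocks_const[OF iu(1)])
  also have "(\<Sum>i\<in>{0..<n1}. if u div n2 = i then 1 else (0::real)) = 1"
    using iu by simp
  also have "(\<Sum>w\<in>{0..<n1*n2}. if pe (n1*n2+u) (n1*n2+w) then 1 else 0) 
     = (\<Sum>w\<in>{0..<n1*n2}. if u div n2 = w div n2 \<and> E2 (u mod n2) (w mod n2) then 1 else (0::real))"
    using pe_bb[OF u] by (intro sum.cong) auto
  also have "\<dots> = (\<Sum>i\<in>{0..<n1}. \<Sum>k\<in>{0..<n2}. if u div n2 = i \<and> E2 (u mod n2) k then 1 else (0::real))"
    by (simp add: sum_div_mod)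
  also have "\<dots> = (\<Sum>i\<in>{0..<n1}. if u div n2 = i then (\<Sum>k\<in>{0..<n2}. if E2 (u mod n2) k then 1 else (0::real)) else 0)"
    by (intro sum.cong) auto
  also have "\<dots> = (\<Sum>k\<in>{0..<n2}. if E2 (u mod n2) k then 1 else (0::real))"
    using iu by simp
  also have "\<dots> = real (degree n2 E2 (u mod n2))" by (simp add: degree_sum)
  also have "\<dots> = real r2" using G2 iu unfolding regular_graph_def by auto
  finally show ?thesis by simp
qed

end


lemma sum_ind_l: assumes "a < (n::nat)" shows "(\<Sum>i\<in>{0..<n}. (if a = i then 1 else 0) * f i) = (f a :: real)"
proof -
  have "(\<Sum>i\<in>{0..<n}. (if a = i then 1 else 0) * f i) = (\<Sum>i\<in>{0..<n}. if a = i then f i else 0)"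
    by (rule sum.cong) auto
  also have "\<dots> = f a" using assms by (subst sum.delta') auto
  finally show ?thesis .
qed

lemma sum_ind_r: assumes "a < (n::nat)" shows "(\<Sum>i\<in>{0..<n}. f i * (if a = i then 1 else 0)) = (f a :: real)"
proof -
  have "(\<Sum>i\<in>{0..<n}. f i * (if a = i then 1 else 0)) = (\<Sum>i\<in>{0..<n}. if a = i then f i else 0)"
    by (rule sum.cong) auto
  also have "\<dots> = f a" using assms by (subst sum.delta') auto
  finally show ?thesis .
qed

definition Um :: "nat \<Rightarrow> nat \<Rightarrow> real mat" where
  "Um n1 n2 = mat (n1*n2) n1 (\<lambda>(u,j). if u div n2 = j then 1 else 0)"

lemma Um_carrier[simp]: "Um n1 n2 \<in> carrier_mat (n1*n2) n1" by (simp add: Um_def)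
lemma Um_dim[simp]: "dim_row (Um n1 n2) = n1*n2" "dim_col (Um n1 n2) = n1" by (simp_all add: Um_def)

lemma UB: assumes B: "B \<in> carrier_mat n1 n1"
  shows "Um n1 n2 * B = mat (n1*n2) n1 (\<lambda>(u,j). B $$ (u div n2, j))"
proof (rule eq_matI)
  fix u j assume "u < dim_row (mat (n1*n2) n1 (\<lambda>(u,j). B $$ (u div n2, j)))" "j < dim_col (mat (n1*n2) n1 (\<lambda>(u,j). B $$ (u div n2, j)))"
  hence u: "u < n1*n2" and j: "j < n1" by auto
  note iu = idx_bounds[OF u]
  have "(Um n1 n2 * B) $$ (u,j) = (\<Sum>i\<in>{0..<n1}. (if u div n2 = i then 1 else 0) * B $$ (i,j))"
    using u j B by (simp add: Um_def scalar_prod_def)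
  also have "\<dots> = B $$ (u div n2, j)" by (rule sum_ind_l[OF iu(1)])
  finally show "(Um n1 n2 * B) $$ (u,j) = mat (n1*n2) n1 (\<lambda>(u,j). B $$ (u div n2, j)) $$ (u,j)"
    using u j by simp
qed (use B in auto)

lemma UBUt: assumes B: "B \<in> carrier_mat n1 n1"
  shows "Um n1 n2 * B * transpose_mat (Um n1 n2) = mat (n1*n2) (n1*n2) (\<lambda>(u,v). B $$ (u div n2, v div n2))"
proof (rule eq_matI)
  fix u v assume "u < dim_row (mat (n1*n2) (n1*n2) (\<lambda>(u,v). B $$ (u div n2, v div n2)))" "v < dim_col (mat (n1*n2) (n1*n2) (\<lambda>(u,v). B $$ (u div n2, v div n2)))"
  hence u: "u < n1*n2" and v: "v < n1*n2" by auto
  note iv = idx_bounds[OF v]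
  have "(Um n1 n2 * B * transpose_mat (Um n1 n2)) $$ (u,v) = (\<Sum>j\<in>{0..<n1}. B $$ (u div n2, j) * (if v div n2 = j then 1 else 0))"
  proof -
    have "Um n1 n2 * B * transpose_mat (Um n1 n2) = mat (n1*n2) n1 (\<lambda>(u,j). B $$ (u div n2, j)) * transpose_mat (Um n1 n2)"
      by (simp add: UB[OF B])
    thus ?thesis using u v B by (simp add: Um_def scalar_prod_def)
  qed
  also have "\<dots> = B $$ (u div n2, v div n2)" by (rule sum_ind_r[OF iv(1)])
  finally show "(Um n1 n2 * B * transpose_mat (Um n1 n2)) $$ (u,v) = mat (n1*n2) (n1*n2) (\<lambda>(u,v). B $$ (u div n2, v div n2)) $$ (u,v)"
    using u v by simp
qed (use B in \<open>simp_all add: UB[OF B]\<close>)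

lemma BUtU: assumes B: "B \<in> carrier_mat n1 n1"
  shows "B * transpose_mat (Um n1 n2) * Um n1 n2 = real n2 \<cdot>\<^sub>m B"
proof (rule eq_matI)
  fix i j assume "i < dim_row (real n2 \<cdot>\<^sub>m B)" "j < dim_col (real n2 \<cdot>\<^sub>m B)"
  hence i: "i < n1" and j: "j < n1" using B by auto
  have BUt: "(B * transpose_mat (Um n1 n2)) $$ (i,w) = B $$ (i, w div n2)" if w: "w < n1*n2" for w
  proof -
    note iw = idx_bounds[OF w]
    have "(B * transpose_mat (Um n1 n2)) $$ (i,w) = (\<Sum>l\<in>{0..<n1}. B $$ (i,l) * (if w div n2 = l then 1 else 0))"
      using i w B by (simp add: Um_def scalar_prod_def)
    also have "\<dots> = B $$ (i, w div n2)" by (rule sum_ind_r[OF iw(1)])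
    finally show ?thesis .
  qed
  have "(B * transpose_mat (Um n1 n2) * Um n1 n2) $$ (i,j) = (\<Sum>w\<in>{0..<n1*n2}. (B * transpose_mat (Um n1 n2)) $$ (i,w) * (if w div n2 = j then 1 else 0))"
    using i j B by (simp add: Um_def scalar_prod_def)
  also have "\<dots> = (\<Sum>w\<in>{0..<n1*n2}. B $$ (i, w div n2) * (if w div n2 = j then 1 else 0))"
    using BUt by (intro sum.cong) auto
  also have "\<dots> = (\<Sum>l\<in>{0..<n1}. \<Sum>k\<in>{0..<n2}. B $$ (i, l) * (if l = j then 1 else 0))"
    by (simp add: sum_div_mod)
  also have "\<dots> = (\<Sum>l\<in>{0..<n1}. real n2 * B $$ (i, l) * (if j = l then 1 else 0))"
    by (intro sum.cong) auto
  also have "\<dots> = real n2 * B $$ (i,j)" by (rule sum_ind_r[OF j])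
  finally show "(B * transpose_mat (Um n1 n2) * Um n1 n2) $$ (i,j) = (real n2 \<cdot>\<^sub>m B) $$ (i,j)"
    using i j B by simp
qed (use B in auto)

lemma JMJ: assumes M: "M \<in> carrier_mat n n"
  shows "mat n n (\<lambda>_. 1) * M * mat n n (\<lambda>_. 1) = (\<Sum>i<n. \<Sum>j<n. M $$ (i,j)) \<cdot>\<^sub>m mat n n (\<lambda>_. (1::real))"
proof (rule eq_matI)
  fix i j assume "i < dim_row ((\<Sum>i<n. \<Sum>j<n. M $$ (i,j)) \<cdot>\<^sub>m mat n n (\<lambda>_. (1::real)))"
     "j < dim_col ((\<Sum>i<n. \<Sum>j<n. M $$ (i,j)) \<cdot>\<^sub>m mat n n (\<lambda>_. (1::real)))"
  hence i: "i < n" and j: "j < n" by auto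
  have JM: "(mat n n (\<lambda>_. 1) * M) $$ (i',l) = (\<Sum>k\<in>{0..<n}. M $$ (k,l))" if "i' < n" "l < n" for i' l
    using that M by (simp add: scalar_prod_def)
  have "(mat n n (\<lambda>_. 1) * M * mat n n (\<lambda>_. 1)) $$ (i,j) = (\<Sum>l\<in>{0..<n}. (mat n n (\<lambda>_. 1) * M) $$ (i,l))"
    using i j M by (simp add: scalar_prod_def)
  also have "\<dots> = (\<Sum>l\<in>{0..<n}. \<Sum>k\<in>{0..<n}. M $$ (k,l))" using JM i by simp
  also have "\<dots> = (\<Sum>k<n. \<Sum>l<n. M $$ (k,l))" by (subst sum.swap) (simp add: atLeast0LessThan)
  finally show "(mat n n (\<lambda>_. 1) * M * mat n n (\<lambda>_. 1)) $$ (i,j) = ((\<Sum>i<n. \<Sum>j<n. M $$ (i,j)) \<cdot>\<^sub>m mat n n (\<lambda>_. (1::real))) $$ (i,j)"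
    using i j by simp
qed (use M in auto)



lemma Qp_block:
  fixes n1 n2 r1 r2 :: nat and E1 E2 :: "nat \<Rightarrow> nat \<Rightarrow> bool" and x :: real
  assumes G1: "regular_graph n1 E1 r1" and G2: "regular_graph n2 E2 r2"
  defines "Qp \<equiv> signless_laplacian (2*n1*n2) (prod_edge n1 E1 n2 E2)"
  defines "M \<equiv> (x - real n2) \<cdot>\<^sub>m 1\<^sub>m n2 - signless_laplacian n2 E2"
  defines "Z \<equiv> bd n1 n2 (mat n2 n2 (\<lambda>_. 1))"
  defines "N11 \<equiv> (x - real r1 * real n2 - real n2) \<cdot>\<^sub>m 1\<^sub>m (n1*n2) - mat (n1*n2) (n1*n2) (\<lambda>(u,v). adj_matrix n1 E1 $$ (u div n2, v div n2))"
  shows "x \<cdot>\<^sub>m 1\<^sub>m (dim_row Qp) - Qp = four_block_mat N11 (- Z) (- Z) (bd n1 n2 M)"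
proof (rule eq_matI)
  let ?N = "n1*n2"
  let ?pe = "prod_edge n1 E1 n2 E2"
  have dQp: "dim_row Qp = ?N + ?N" "dim_col Qp = ?N + ?N"
    by (simp_all add: Qp_def signless_laplacian_def deg_matrix_def adj_matrix_def mat_diag_def)
  have Qe: "Qp $$ (u,v) = (if u = v then real (degree (2*n1*n2) ?pe v) else 0) + (if ?pe u v then 1 else 0)"
    if "u < ?N + ?N" "v < ?N + ?N" for u v
    using that by (simp add: Qp_def signless_laplacian_def deg_matrix_def adj_matrix_def mat_diag_def)
  have Me: "M $$ (k,l) = (if k = l then x - real n2 - real r2 else 0) - (if E2 k l then 1 else 0)"
    if "k < n2" "l < n2" for k l
  proof -
    have "degree n2 E2 l = r2" using G2 that unfolding regular_graph_def by auto
    thus ?thesis using that 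
      by (simp add: M_def signless_laplacian_def deg_matrix_def adj_matrix_def mat_diag_def)
  qed
  fix u v assume "u < dim_row (four_block_mat N11 (- Z) (- Z) (bd n1 n2 M))"
    "v < dim_col (four_block_mat N11 (- Z) (- Z) (bd n1 n2 M))"
  hence u: "u < ?N + ?N" and v: "v < ?N + ?N" by (auto simp: N11_def)
  have dims: "dim_row N11 = ?N" "dim_col N11 = ?N" by (simp_all add: N11_def)
  show "(x \<cdot>\<^sub>m 1\<^sub>m (dim_row Qp) - Qp) $$ (u,v) = four_block_mat N11 (- Z) (- Z) (bd n1 n2 M) $$ (u,v)"
  proof (cases "u < ?N")
    case uT: True
    note iu = idx_bounds[OF uT]
    show ?thesis
    proof (cases "v < ?N")
      case vT: True
      note iv = idx_bounds[OF vT]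
      have "(x \<cdot>\<^sub>m 1\<^sub>m (dim_row Qp) - Qp) $$ (u,v) = (if u = v then x else 0) - ((if u = v then real (degree (2*n1*n2) ?pe v) else 0) + (if E1 (u div n2) (v div n2) then 1 else 0))"
        using u v dQp Qe[OF u v] pe_aa[OF uT vT] by simp
      also have "\<dots> = N11 $$ (u,v)"
        using uT vT deg_a[OF vT G1] iu iv by (simp add: N11_def adj_matrix_def)
      finally show ?thesis using uT vT dims u v by simp
    next
      case vF: False
      define v' where "v' = v - ?N"
      have vv: "v = ?N + v'" and v': "v' < ?N" using vF v unfolding v'_def by auto
      note iv = idx_bounds[OF v']
      have "(x \<cdot>\<^sub>m 1\<^sub>m (dim_row Qp) - Qp) $$ (u,v) = - (if u div n2 = v' div n2 then 1 else 0)"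
        using u v dQp Qe[OF u v] pe_ab[OF uT v'] uT vF unfolding vv by simp
      also have "\<dots> = (- Z) $$ (u, v')"
        using uT v' iu iv by (simp add: Z_def bd_def)
      finally show ?thesis using uT vF dims u v unfolding v'_def by simp
    qed
  next
    case uF: False
    define u' where "u' = u - ?N"
    have uu: "u = ?N + u'" and u': "u' < ?N" using uF u unfolding u'_def by auto
    note iu = idx_bounds[OF u']
    show ?thesis
    proof (cases "v < ?N")
      case vT: True
      note iv = idx_bounds[OF vT]
      have "(x \<cdot>\<^sub>m 1\<^sub>m (dim_row Qp) - Qp) $$ (u,v) = - (if u' div n2 = v div n2 then 1 else 0)"
        using u v dQp Qe[OF u v] pe_ba[OF u' vT] uF vT unfolding uu by simp
      also have "\<dots> = (- Z) $$ (u', v)"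
        using vT u' iu iv by (simp add: Z_def bd_def)
      finally show ?thesis using uF vT dims u v unfolding u'_def by simp
    next
      case vF: False
      define v' where "v' = v - ?N"
      have vv: "v = ?N + v'" and v': "v' < ?N" using vF v unfolding v'_def by auto
      note iv = idx_bounds[OF v']
      have eq: "u' = v' \<longleftrightarrow> u' div n2 = v' div n2 \<and> u' mod n2 = v' mod n2"
        by (metis div_mult_mod_eq)
      have "(x \<cdot>\<^sub>m 1\<^sub>m (dim_row Qp) - Qp) $$ (u,v) = (if u' = v' then x else 0) - ((if u' = v' then real (degree (2*n1*n2) ?pe (?N + v')) else 0) + (if u' div n2 = v' div n2 \<and> E2 (u' mod n2) (v' mod n2) then 1 else 0))"
        using u v dQp Qe[OF u v] pe_bb[OF u' v'] unfolding uu vv by simp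
      also have "\<dots> = bd n1 n2 M $$ (u', v')"
        using u' v' iu iv deg_b[OF v' G2] Me[OF iu(2) iv(2)] eq by (auto simp: bd_def)
      finally show ?thesis using uF vF dims u v unfolding u'_def v'_def by (simp add: M_def)
    qed
  qed
qed (simp_all add: Qp_def signless_laplacian_def deg_matrix_def adj_matrix_def mat_diag_def N11_def)



theorem theorem2:
  fixes n1 n2 r1 r2 :: nat and E1 E2 :: "nat \<Rightarrow> nat \<Rightarrow> bool" and \<nu> :: "nat \<Rightarrow> real"
    and x :: real
  assumes n1: "n1 \<ge> 1" and n2: "n2 \<ge> 1"
    and G1: "regular_graph n1 E1 r1"
    and G2: "regular_graph n2 E2 r2"
    and eig: "char_poly (signless_laplacian n1 E1) = (\<Prod>i<n1. [:- \<nu> i, 1:])"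
    and x_ok: "charf (signless_laplacian n2 E2) (x - real n2) \<noteq> 0"
  shows "charf (signless_laplacian (2*n1*n2) (prod_edge n1 E1 n2 E2)) x =
     (x - real r1 * real n2 - real n2) ^ (n1 * (n2 - 1))
     * (charf (signless_laplacian n2 E2) (x - real n2)) ^ n1
     * (\<Prod>i<n1. x - real n2 - real n2 * \<nu> i
          - real n2 * coronal (signless_laplacian n2 E2) (x - real n2))"
proof -
  define N where "N = n1*n2"
  define Qp where "Qp = signless_laplacian (2*n1*n2) (prod_edge n1 E1 n2 E2)"
  define Q2 where "Q2 = signless_laplacian n2 E2"
  define Q1 where "Q1 = signless_laplacian n1 E1"
  define A1 where "A1 = adj_matrix n1 E1"
  define M where "M = (x - real n2) \<cdot>\<^sub>m 1\<^sub>m n2 - Q2"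
  define J where "J = mat n2 n2 (\<lambda>_. 1::real)"
  define Z where "Z = bd n1 n2 J"
  define a where "a = x - real r1 * real n2 - real n2"
  define N11 where "N11 = a \<cdot>\<^sub>m 1\<^sub>m N - mat N N (\<lambda>(u,v). A1 $$ (u div n2, v div n2))"
  have Q2c: "Q2 \<in> carrier_mat n2 n2" 
    by (simp add: Q2_def signless_laplacian_def deg_matrix_def adj_matrix_def)
  have Q1c: "Q1 \<in> carrier_mat n1 n1" 
    by (simp add: Q1_def signless_laplacian_def deg_matrix_def adj_matrix_def)
  have A1c: "A1 \<in> carrier_mat n1 n1" by (simp add: A1_def adj_matrix_def)
  have Mc: "M \<in> carrier_mat n2 n2" using Q2c unfolding M_def by (intro minus_carrier_mat) auto
  have Jc: "J \<in> carrier_mat n2 n2" by (simp add: J_def)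
  have dQ2: "dim_row Q2 = n2" using Q2c by simp
  have chM: "charf Q2 (x - real n2) = det M" by (simp add: charf_def dQ2 M_def)
  hence dM: "det M \<noteq> 0" using x_ok Q2_def by simp
  obtain Mi where inv: "mat_inverse M = Some Mi"
  proof (cases "mat_inverse M")
    case None
    have "M \<notin> Units (ring_mat TYPE(real) n2 ())" by (rule mat_inverse(1)[OF Mc None])
    moreover have "M \<in> Units (ring_mat TYPE(real) n2 ())" by (rule det_non_zero_imp_unit[OF Mc dM])
    ultimately show ?thesis by blast
  qed
  with mat_inverse(2)[OF Mc] have MMi: "M * Mi = 1\<^sub>m n2" and Mic: "Mi \<in> carrier_mat n2 n2" by auto
  define \<chi> where "\<chi> = (\<Sum>i<n2. \<Sum>j<n2. Mi $$ (i,j))"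
  have cor: "coronal Q2 (x - real n2) = \<chi>"
    using inv by (simp add: coronal_def dQ2 \<chi>_def M_def)
  have blk: "x \<cdot>\<^sub>m 1\<^sub>m (dim_row Qp) - Qp = four_block_mat N11 (- Z) (- Z) (bd n1 n2 M)"
    unfolding Qp_def N11_def Z_def M_def a_def N_def A1_def J_def Q2_def
    by (rule Qp_block[OF G1 G2])
  have Zc: "Z \<in> carrier_mat N N" by (simp add: Z_def N_def)
  have N11c: "N11 \<in> carrier_mat N N" unfolding N11_def by (intro minus_carrier_mat) auto
  have bdM: "bd n1 n2 M * bd n1 n2 Mi = 1\<^sub>m N" 
    using bd_mult[OF Mc Mic] MMi bd_one by (simp add: N_def)
  have "charf Qp x = det (four_block_mat N11 (- Z) (- Z) (bd n1 n2 M))"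
    using blk by (simp add: charf_def)
  also have "\<dots> = det (bd n1 n2 M) * det (N11 - (- Z) * bd n1 n2 Mi * (- Z))"
    by (rule schur_br[of _ N _ N], insert N11c Zc bdM, auto simp: N_def)
  also have "det (bd n1 n2 M) = det M ^ n1" using det_bd[OF Mc] n2 by simp
  also have "(- Z) * bd n1 n2 Mi * (- Z) = bd n1 n2 (\<chi> \<cdot>\<^sub>m J)"
  proof -
    have "(- Z) * bd n1 n2 Mi * (- Z) = Z * bd n1 n2 Mi * Z"
      using Zc by (simp add: N_def Z_def)
    also have "\<dots> = bd n1 n2 (J * Mi * J)"
      using bd_mult[OF Jc Mic] bd_mult[of "J * Mi" n2 J n1] Jc Mic by (simp add: Z_def)
    also have "J * Mi * J = \<chi> \<cdot>\<^sub>m J" unfolding J_def \<chi>_def by (rule JMJ[OF Mic])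
    finally show ?thesis .
  qed
  also have "N11 - bd n1 n2 (\<chi> \<cdot>\<^sub>m J) = a \<cdot>\<^sub>m 1\<^sub>m N - Um n1 n2 * (A1 + \<chi> \<cdot>\<^sub>m 1\<^sub>m n1) * transpose_mat (Um n1 n2)"
  proof -
    have B: "A1 + \<chi> \<cdot>\<^sub>m 1\<^sub>m n1 \<in> carrier_mat n1 n1" using A1c by simp
    show ?thesis unfolding UBUt[OF B]
    proof (rule eq_matI)
      fix u v assume "u < dim_row (a \<cdot>\<^sub>m 1\<^sub>m N - mat (n1*n2) (n1*n2) (\<lambda>(u,v). (A1 + \<chi> \<cdot>\<^sub>m 1\<^sub>m n1) $$ (u div n2, v div n2)))"
        "v < dim_col (a \<cdot>\<^sub>m 1\<^sub>m N - mat (n1*n2) (n1*n2) (\<lambda>(u,v). (A1 + \<chi> \<cdot>\<^sub>m 1\<^sub>m n1) $$ (u div n2, v div n2)))"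
      hence u: "u < n1*n2" and v: "v < n1*n2" by (auto simp: N_def)
      note iu = idx_bounds[OF u] and iv = idx_bounds[OF v]
      show "(N11 - bd n1 n2 (\<chi> \<cdot>\<^sub>m J)) $$ (u,v) = (a \<cdot>\<^sub>m 1\<^sub>m N - mat (n1*n2) (n1*n2) (\<lambda>(u,v). (A1 + \<chi> \<cdot>\<^sub>m 1\<^sub>m n1) $$ (u div n2, v div n2))) $$ (u,v)"
        using u v iu iv A1c by (simp add: N11_def bd_def J_def N_def)
    qed (simp_all add: N11_def N_def)
  qed
  also have "det (a \<cdot>\<^sub>m 1\<^sub>m N - Um n1 n2 * (A1 + \<chi> \<cdot>\<^sub>m 1\<^sub>m n1) * transpose_mat (Um n1 n2))
     = a ^ (N - n1) * det (a \<cdot>\<^sub>m 1\<^sub>m n1 - real n2 \<cdot>\<^sub>m (A1 + \<chi> \<cdot>\<^sub>m 1\<^sub>m n1))"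
  proof -
    have B: "A1 + \<chi> \<cdot>\<^sub>m 1\<^sub>m n1 \<in> carrier_mat n1 n1" using A1c by simp
    have V: "(A1 + \<chi> \<cdot>\<^sub>m 1\<^sub>m n1) * transpose_mat (Um n1 n2) \<in> carrier_mat n1 N" using B unfolding N_def by (intro mult_carrier_mat[of _ n1 n1]) auto
    have U: "Um n1 n2 \<in> carrier_mat N n1" by (simp add: N_def)
    have "Um n1 n2 * (A1 + \<chi> \<cdot>\<^sub>m 1\<^sub>m n1) * transpose_mat (Um n1 n2) = Um n1 n2 * ((A1 + \<chi> \<cdot>\<^sub>m 1\<^sub>m n1) * transpose_mat (Um n1 n2))"
      using B by (intro assoc_mult_mat[of _ N n1 _ n1 _ N]) (auto simp: N_def)
    moreover have "N \<ge> n1" using n2 by (simp add: N_def)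
    ultimately show ?thesis using sylvester[OF U V, of a] BUtU[OF B, of n2] by simp
  qed
  also have "det (a \<cdot>\<^sub>m 1\<^sub>m n1 - real n2 \<cdot>\<^sub>m (A1 + \<chi> \<cdot>\<^sub>m 1\<^sub>m n1)) = 
     (\<Prod>i<n1. x - real n2 - real n2 * \<nu> i - real n2 * \<chi>)"
  proof -
    define s where "s = (a - real n2 * \<chi>) / real n2 + real r1"
    have Q1e: "Q1 $$ (i,j) = (if i = j then real r1 else 0) + A1 $$ (i,j)" if "i < n1" "j < n1" for i j
    proof -
      have "degree n1 E1 j = r1" using G1 that unfolding regular_graph_def by auto
      thus ?thesis using that by (simp add: Q1_def A1_def signless_laplacian_def deg_matrix_def adj_matrix_def mat_diag_def)
    qed
    have "a \<cdot>\<^sub>m 1\<^sub>m n1 - real n2 \<cdot>\<^sub>m (A1 + \<chi> \<cdot>\<^sub>m 1\<^sub>m n1) = real n2 \<cdot>\<^sub>m (s \<cdot>\<^sub>m 1\<^sub>m n1 - Q1)"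
      using A1c Q1c n2 Q1e by (intro eq_matI) (auto simp: s_def field_simps)
    hence "det (a \<cdot>\<^sub>m 1\<^sub>m n1 - real n2 \<cdot>\<^sub>m (A1 + \<chi> \<cdot>\<^sub>m 1\<^sub>m n1)) = real n2 ^ n1 * det (s \<cdot>\<^sub>m 1\<^sub>m n1 - Q1)"
      using Q1c by simp
    also have "det (s \<cdot>\<^sub>m 1\<^sub>m n1 - Q1) = poly (char_poly Q1) s" by (rule char_poly_eval[OF Q1c, symmetric])
    also have "\<dots> = (\<Prod>i<n1. s - \<nu> i)" using eig by (simp add: Q1_def poly_prod)
    also have "real n2 ^ n1 * (\<Prod>i<n1. s - \<nu> i) = (\<Prod>i<n1. real n2 * (s - \<nu> i))"
      by (simp add: prod.distrib)
    also have "\<dots> = (\<Prod>i<n1. x - real n2 - real n2 * \<nu> i - real n2 * \<chi>)"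
      using n2 by (intro prod.cong) (auto simp: s_def a_def field_simps)
    finally show ?thesis .
  qed
  finally have "charf Qp x = det M ^ n1 * (a ^ (N - n1) * (\<Prod>i<n1. x - real n2 - real n2 * \<nu> i - real n2 * \<chi>))" .
  moreover have "N - n1 = n1 * (n2 - 1)" by (simp add: N_def diff_mult_distrib2)
  ultimately show ?thesis 
    using chM cor unfolding Qp_def Q2_def a_def by (simp add: ac_simps)
qed

end
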